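(* Let $V$ be a unit intensity Poisson process on $\mathbb{R}^2$ and $R,\alpha>0$. The probability that $Q(0,R)=[-R,R]^2$ is not $\alpha$-sealed is at most $\lceil 8R/\alpha\rceil e^{-\pi\alpha^2/4}$.
   Context: A set $S\subset\mathbb{R}^2$ is $\alpha$-sealed w.r.t. $V$ if $d(x,V)\le\alpha$ for every $x\in\partial S$. *)

theory Defs
  imports "HOL-Probability.Probability"
begin

text \<open>Euclidean distance from a point to a set, with the convention d(x, {}) = infinity.\<close>
definition set_dist :: "real^2 \<Rightarrow> (real^2) set \<Rightarrow> ereal" where
  "set_dist x V = (INF v\<in>V. ereal (dist x v))"

definition alpha_sealed :: "real \<Rightarrow> (real^2) set \<Rightarrow> (real^2) set \<Rightarrow> bool" where
  "alpha_sealed \<alpha> S V \<longleftrightarrow> (\<forall>x\<in>frontier S. set_dist x V \<le> ereal \<alpha>)"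

definition poisson_process :: "'a measure \<Rightarrow> ('a \<Rightarrow> (real^2) set) \<Rightarrow> real \<Rightarrow> bool" where
  "poisson_process M V lam \<longleftrightarrow>
     prob_space M \<and>
     (\<forall>\<omega>\<in>space M. \<forall>B. bounded B \<longrightarrow> finite (V \<omega> \<inter> B)) \<and>
     (\<forall>B\<in>sets borel. bounded B \<longrightarrow>
        (\<lambda>\<omega>. card (V \<omega> \<inter> B)) \<in> measurable M (count_space UNIV) \<and>
        (\<forall>k::nat. measure M {\<omega>\<in>space M. card (V \<omega> \<inter> B) = k}
            = exp (- lam * measure lborel B) * (lam * measure lborel B) ^ k / fact k)) \<and>
     (\<forall>(I::nat set) (B::nat \<Rightarrow> (real^2) set).
        finite I \<and> (\<forall>i\<in>I. B i \<in> sets borel \<and> bounded (B i)) \<and> disjoint_family_on B I \<longrightarrow>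
        prob_space.indep_vars M (\<lambda>_. count_space UNIV) (\<lambda>i \<omega>. card (V \<omega> \<inter> B i)) I)"

definition Qsq :: "real \<Rightarrow> (real^2) set" where
  "Qsq R = cbox (\<chi> i. - R) (\<chi> i. R)"

end

theory Submission
  imports Defs
begin

definition gx :: "real \<Rightarrow> real \<Rightarrow> real" where
 "gx R t = (if t \<le> 2*R then -R + t else if t \<le> 4*R then R else if t \<le> 6*R then 5*R - t else -R)"
definition gy :: "real \<Rightarrow> real \<Rightarrow> real" where
 "gy R t = (if t \<le> 2*R then -R else if t \<le> 4*R then t - 3*R else if t \<le> 6*R then R else 7*R - t)"
definition gam :: "real \<Rightarrow> real \<Rightarrow> real^2" where
 "gam R t = (\<chi> i. if i = 1 then gx R t else gy R t)"

lemma g_lip: "R > 0 \<Longrightarrow> 0 \<le> s \<Longrightarrow> s \<le> 8*R \<Longrightarrow> 0 \<le> t \<Longrightarrow> t \<le> 8*R \<Longrightarrow>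
   \<bar>gx R s - gx R t\<bar> + \<bar>gy R s - gy R t\<bar> \<le> \<bar>s - t\<bar>"
  unfolding gx_def gy_def by (auto split: if_splits)

lemma gam_lip: assumes "R > 0" "0 \<le> s" "s \<le> 8*R" "0 \<le> t" "t \<le> 8*R"
  shows "dist (gam R s) (gam R t) \<le> \<bar>s - t\<bar>"
proof -
  have "dist (gam R s) (gam R t) = norm (gam R s - gam R t)" by (simp add: dist_norm)
  also have "\<dots> \<le> (\<Sum>i\<in>UNIV. \<bar>(gam R s - gam R t) $ i\<bar>)" by (rule norm_le_l1_cart)
  also have "\<dots> = \<bar>gx R s - gx R t\<bar> + \<bar>gy R s - gy R t\<bar>" by (simp add: sum_2 gam_def)
  also have "\<dots> \<le> \<bar>s - t\<bar>" using g_lip assms by blast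
  finally show ?thesis .
qed

lemma gam_front: assumes "R > 0" "0 \<le> t" "t \<le> 8*R"
  shows "gam R t \<in> frontier (Qsq R)"
  using assms unfolding Qsq_def frontier_cbox
  by (auto simp: mem_box_cart forall_2 gam_def gx_def gy_def)

lemma front_gam: assumes "R > 0" "x \<in> frontier (Qsq R)"
  shows "\<exists>t. 0 \<le> t \<and> t \<le> 8*R \<and> x = gam R t"
proof -
  have b: "-R \<le> x$1" "x$1 \<le> R" "-R \<le> x$2" "x$2 \<le> R"
    and e: "x$1 = -R \<or> x$1 = R \<or> x$2 = -R \<or> x$2 = R"
    using assms unfolding Qsq_def frontier_cbox by (auto simp: mem_box_cart forall_2)
  have eq: "x = gam R t" if "gx R t = x$1" "gy R t = x$2" for t
    using that by (simp add: gam_def vec_eq_iff forall_2)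
  from e show ?thesis
  proof (elim disjE)
    assume h: "x$2 = -R"
    have "x = gam R (x$1 + R)" by (rule eq) (use b h assms in \<open>simp_all add: gx_def gy_def\<close>)
    then show ?thesis using b h assms by (intro exI[of _ "x$1 + R"]) auto
  next
    assume h: "x$1 = R"
    have "x = gam R (x$2 + 3*R)" by (rule eq) (use b h assms in \<open>simp_all add: gx_def gy_def\<close>)
    then show ?thesis using b h assms by (intro exI[of _ "x$2 + 3*R"]) auto
  next
    assume h: "x$2 = R"
    have "x = gam R (5*R - x$1)" by (rule eq) (use b h assms in \<open>simp_all add: gx_def gy_def\<close>)
    then show ?thesis using b h assms by (intro exI[of _ "5*R - x$1"]) auto
  next
    assume h: "x$1 = -R"
    have "x = gam R (7*R - x$2)" by (rule eq) (use b h assms in \<open>simp_all add: gx_def gy_def\<close>)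
    then show ?thesis using b h assms by (intro exI[of _ "7*R - x$2"]) auto
  qed
qed

lemma aux_ineq: "(p::real) \<le> q + u \<Longrightarrow> u \<le> w + y \<Longrightarrow> q < y \<Longrightarrow> y < (z-w)/3 \<Longrightarrow> w < z \<Longrightarrow> p < z"
proof -
  assume h: "p \<le> q + u" "u \<le> w + y" "q < y" "y < (z-w)/3" "w < z"
  have "3*y < z - w" using h(4) by simp
  then show ?thesis using h(1-3,5) by linarith
qed

lemma rat_approx: fixes t \<delta> :: real assumes "R > 0" "0 \<le> t" "t \<le> 8*R" "\<delta> > 0"
  shows "\<exists>r\<in>\<rat>. 0 \<le> r \<and> r \<le> 8*R \<and> \<bar>r - t\<bar> < \<delta>"
proof (cases "t < 8*R")
  case True
  then obtain r where "r \<in> \<rat>" "t < r" "r < min (t+\<delta>) (8*R)"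
    using Rats_dense_in_real[of t "min (t+\<delta>) (8*R)"] assms by auto
  then show ?thesis using assms by (intro bexI[of _ r]) auto
next
  case False
  then obtain r where "r \<in> \<rat>" "max (t-\<delta>) 0 < r" "r < t"
    using Rats_dense_in_real[of "max (t-\<delta>) 0" t] assms by auto
  then show ?thesis using assms by (intro bexI[of _ r]) auto
qed

lemma set_dist_gt: fixes c a :: real assumes "\<And>v. v \<in> W \<Longrightarrow> dist x v > c"  "c > a"
  shows "set_dist x W > ereal a"
proof -
  have "ereal c \<le> set_dist x W" unfolding set_dist_def
    using assms(1) by (intro INF_greatest) (auto intro: less_imp_le)
  moreover have "ereal a < ereal c" using assms(2) by simp
  ultimately show ?thesis by (meson order_less_le_trans)
qed

lemma set_dist_le: "v \<in> W \<Longrightarrow> set_dist x W \<le> ereal (dist x v)"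
  unfolding set_dist_def by (rule INF_lower)

lemma key_count:
  assumes "R > 0" "\<alpha> > 0"
  shows "(\<exists>x\<in>frontier (Qsq R). set_dist x W > ereal \<alpha>) \<longleftrightarrow>
    (\<exists>q\<in>\<rat> \<inter> {0..8*R}. \<exists>n::nat. W \<inter> cball (gam R q) (\<alpha> + inverse (real (Suc n))) = {})"
proof
  assume "\<exists>x\<in>frontier (Qsq R). set_dist x W > ereal \<alpha>"
  then obtain x where x: "x \<in> frontier (Qsq R)" "set_dist x W > ereal \<alpha>" by blast
  obtain t where t: "0 \<le> t" "t \<le> 8*R" "x = gam R t" using front_gam[OF assms(1) x(1)] by blast
  obtain c where c: "\<alpha> < c" "ereal c < set_dist x W" using ereal_dense2[OF x(2)] by auto
  obtain n where n: "inverse (real (Suc n)) < (c - \<alpha>)/3" using reals_Archimedean[of "(c-\<alpha>)/3"] c by auto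
  obtain r where r: "r \<in> \<rat>" "0 \<le> r" "r \<le> 8*R" "\<bar>r - t\<bar> < inverse (real (Suc n))"
    using rat_approx[OF assms(1) t(1,2), of "inverse (real (Suc n))"] by auto
  have dxr: "dist x (gam R r) < inverse (real (Suc n))"
    using gam_lip[OF assms(1) t(1,2) r(2,3)] r(4) t(3) by (simp add: abs_minus_commute)
  have "W \<inter> cball (gam R r) (\<alpha> + inverse (real (Suc n))) = {}"
  proof (rule ccontr)
    assume "W \<inter> cball (gam R r) (\<alpha> + inverse (real (Suc n))) \<noteq> {}"
    then obtain v where v: "v \<in> W" "dist (gam R r) v \<le> \<alpha> + inverse (real (Suc n))" by auto
    have "dist x v \<le> dist x (gam R r) + dist (gam R r) v" by (rule dist_triangle)
    hence "dist x v < c" by (rule aux_ineq[OF _ v(2) dxr n c(1)])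
    moreover have "ereal c < ereal (dist x v)" using c(2) set_dist_le[OF v(1), of x] by (rule order_less_le_trans)
    ultimately show False by simp
  qed
  then show "\<exists>q\<in>\<rat> \<inter> {0..8*R}. \<exists>n::nat. W \<inter> cball (gam R q) (\<alpha> + inverse (real (Suc n))) = {}"
    using r by (intro bexI[of _ r] exI[of _ n]) auto
next
  assume "\<exists>q\<in>\<rat> \<inter> {0..8*R}. \<exists>n::nat. W \<inter> cball (gam R q) (\<alpha> + inverse (real (Suc n))) = {}"
  then obtain q n where q: "q \<in> {0..8*R}" and e: "W \<inter> cball (gam R q) (\<alpha> + inverse (real (Suc n))) = {}"
    by blast
  have "set_dist (gam R q) W > ereal \<alpha>"
    by (rule set_dist_gt[where c="\<alpha> + inverse (real (Suc n))"]) (use e in \<open>auto simp: mem_cball\<close>)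
  then show "\<exists>x\<in>frontier (Qsq R). set_dist x W > ereal \<alpha>" using gam_front[OF assms(1)] q by auto
qed

lemma cover:
  assumes "R > 0" "\<alpha> > 0" "0 \<le> t" "t \<le> 8*R"
  defines "N \<equiv> nat \<lceil>8*R/\<alpha>\<rceil>"
  shows "\<exists>i<N. dist (gam R t) (gam R ((real i + 1/2) * (8*R/N))) \<le> \<alpha>/2"
proof -
  define L where "L = 8*R/N"
  have "8*R/\<alpha> > 0" using assms by simp
  then have N1: "N \<ge> 1" unfolding N_def by linarith
  have NL: "real N \<ge> 8*R/\<alpha>" unfolding N_def by linarith
  have L0: "L > 0" using N1 assms unfolding L_def by simp
  have "8*R \<le> \<alpha> * real N" using NL assms(2) by (simp add: pos_divide_le_eq mult.commute)
  then have La: "L \<le> \<alpha>" using N1 unfolding L_def by (simp add: pos_divide_le_eq mult.commute)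
  define i where "i = min (N-1) (nat \<lfloor>t/L\<rfloor>)"
  have tL: "t/L \<le> N" using assms L0 N1 unfolding L_def by (simp add: field_simps)
  have fl: "real (nat \<lfloor>t/L\<rfloor>) \<le> t/L" "t/L < real (nat \<lfloor>t/L\<rfloor>) + 1"
    using assms L0 by (simp_all add: divide_nonneg_pos)
  have i1: "real i \<le> t/L" "t/L \<le> real i + 1"
    using fl tL N1 unfolding i_def by (auto simp: min_def of_nat_diff)
  have iN: "i < N" using N1 unfolding i_def by auto
  have hL: "\<bar>t - (real i + 1/2) * L\<bar> \<le> L/2"
  proof -
    have "real i * L \<le> t" "t \<le> real i * L + L" using i1 L0 by (simp_all add: field_simps)
    moreover have "(real i + 1/2) * L = real i * L + L/2" by (simp add: algebra_simps)
    ultimately show ?thesis by (simp only: abs_le_iff) linarith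
  qed
  have s0: "0 \<le> (real i + 1/2) * L" using L0 by simp
  have s8: "(real i + 1/2) * L \<le> 8*R"
  proof -
    have "real i + 1/2 \<le> real N" using iN by linarith
    then have "(real i + 1/2) * L \<le> real N * L" using L0 by (simp add: mult_right_mono)
    also have "\<dots> = 8*R" using N1 unfolding L_def by simp
    finally show ?thesis .
  qed
  have "dist (gam R t) (gam R ((real i + 1/2) * L)) \<le> \<bar>t - (real i + 1/2) * L\<bar>"
    by (rule gam_lip[OF assms(1,3,4) s0 s8])
  then have "dist (gam R t) (gam R ((real i + 1/2) * L)) \<le> \<alpha>/2"
    using \<open>\<bar>t - (real i + 1/2) * L\<bar> \<le> L/2\<close> La by linarith
  then show ?thesis using iN unfolding L_def by blast
qed

theorem lemma10:
  fixes M :: "'a measure" and V :: "'a \<Rightarrow> (real^2) set" and R \<alpha> :: real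
  assumes "poisson_process M V 1" and "R > 0" and "\<alpha> > 0"
  shows "{\<omega>\<in>space M. \<not> alpha_sealed \<alpha> (Qsq R) (V \<omega>)} \<in> sets M \<and>
         measure M {\<omega>\<in>space M. \<not> alpha_sealed \<alpha> (Qsq R) (V \<omega>)}
           \<le> of_int \<lceil>8 * R / \<alpha>\<rceil> * exp (- pi * \<alpha>^2 / 4)"
proof -
  note pp = assms(1)[unfolded poisson_process_def]
  note c2 = pp[THEN conjunct2, THEN conjunct1]
  note c3 = pp[THEN conjunct2, THEN conjunct2, THEN conjunct1]
  interpret P: prob_space M using pp[THEN conjunct1] .
  have fin: "\<And>\<omega> B. \<omega> \<in> space M \<Longrightarrow> bounded B \<Longrightarrow> finite (V \<omega> \<inter> B)"
    using c2 by blast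
  have meas: "\<And>B. B \<in> sets borel \<Longrightarrow> bounded B \<Longrightarrow> (\<lambda>\<omega>. card (V \<omega> \<inter> B)) \<in> measurable M (count_space UNIV)"
    using c3 by blast
  have law: "\<And>B k. B \<in> sets borel \<Longrightarrow> bounded B \<Longrightarrow> measure M {\<omega>\<in>space M. card (V \<omega> \<inter> B) = k}
            = exp (- 1 * measure lborel B) * (1 * measure lborel B) ^ k / fact k"
    using c3 by blast
  have emp_eq: "{\<omega>\<in>space M. V \<omega> \<inter> B = {}} = {\<omega>\<in>space M. card (V \<omega> \<inter> B) = 0}" if "bounded B" for B
    using fin[OF _ that] by auto
  have emp_sets: "{\<omega>\<in>space M. V \<omega> \<inter> B = {}} \<in> sets M" if "B \<in> sets borel" "bounded B" for B
  proof -
    have "{\<omega>\<in>space M. card (V \<omega> \<inter> B) = 0} = (\<lambda>\<omega>. card (V \<omega> \<inter> B)) -` {0} \<inter> space M" by auto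
    also have "\<dots> \<in> sets M" by (rule measurable_sets[OF meas[OF that]]) auto
    finally show ?thesis using emp_eq[OF that(2)] by simp
  qed
  define E where "E = {\<omega>\<in>space M. \<not> alpha_sealed \<alpha> (Qsq R) (V \<omega>)}"
  have E_eq: "E = (\<Union>qn\<in>(\<rat> \<inter> {0..8*R}) \<times> UNIV.
      {\<omega>\<in>space M. V \<omega> \<inter> cball (gam R (fst qn)) (\<alpha> + inverse (real (Suc (snd qn)))) = {}})"
  proof -
    have "\<not> alpha_sealed \<alpha> (Qsq R) W \<longleftrightarrow>
      (\<exists>q\<in>\<rat> \<inter> {0..8*R}. \<exists>n::nat. W \<inter> cball (gam R q) (\<alpha> + inverse (real (Suc n))) = {})" for W
      unfolding alpha_sealed_def using key_count[OF assms(2,3), of W] by (auto simp: not_le)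
    then show ?thesis unfolding E_def by (simp add: set_eq_iff)
  qed
  have E_sets: "E \<in> sets M"
    unfolding E_eq
  proof (rule sets.countable_UN'')
    show "countable ((\<rat> \<inter> {0..8*R}) \<times> (UNIV::nat set))"
      by (intro countable_SIGMA countable_Int1 countable_rat) simp
  next
    fix qn :: "real \<times> nat"
    show "{\<omega>\<in>space M. V \<omega> \<inter> cball (gam R (fst qn)) (\<alpha> + inverse (real (Suc (snd qn)))) = {}} \<in> sets M"
      by (rule emp_sets) (simp_all add: borel_closed)
  qed
  define N where "N = nat \<lceil>8*R/\<alpha>\<rceil>"
  define m where "m i = gam R ((real i + 1/2) * (8*R/N))" for i :: nat
  define A where "A i = {\<omega>\<in>space M. V \<omega> \<inter> ball (m i) (\<alpha>/2) = {}}" for i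
  have A_sets: "A i \<in> sets M" for i unfolding A_def by (rule emp_sets) (simp_all add: borel_open)
  have A_meas: "measure M (A i) = exp (- pi * \<alpha>^2 / 4)" for i
  proof -
    have "measure M (A i) = exp (- 1 * measure lborel (ball (m i) (\<alpha>/2))) * (1 * measure lborel (ball (m i) (\<alpha>/2))) ^ 0 / fact 0"
      unfolding A_def emp_eq[OF bounded_ball] by (rule law) auto
    also have "measure lborel (ball (m i) (\<alpha>/2)) = (\<alpha>/2)^2 * pi" using circle_area[of "\<alpha>/2"] assms(3) by simp
    finally show ?thesis by (simp add: power_divide)
  qed
  have sub: "E \<subseteq> (\<Union>i<N. A i)"
  proof
    fix \<omega> assume w: "\<omega> \<in> E"
    then have ws: "\<omega> \<in> space M" unfolding E_def by auto
    from w obtain x where x: "x \<in> frontier (Qsq R)" "set_dist x (V \<omega>) > ereal \<alpha>"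
      unfolding E_def alpha_sealed_def by (auto simp: not_le)
    obtain t where t: "0 \<le> t" "t \<le> 8*R" "x = gam R t" using front_gam[OF assms(2) x(1)] by blast
    obtain i where i: "i < N" "dist x (m i) \<le> \<alpha>/2"
      using cover[OF assms(2,3) t(1,2)] t(3) unfolding N_def m_def by blast
    have "V \<omega> \<inter> ball (m i) (\<alpha>/2) = {}"
    proof (rule ccontr)
      assume "V \<omega> \<inter> ball (m i) (\<alpha>/2) \<noteq> {}"
      then obtain v where v: "v \<in> V \<omega>" "dist (m i) v < \<alpha>/2" by auto
      have "dist x v \<le> dist x (m i) + dist (m i) v" by (rule dist_triangle)
      then have "dist x v < \<alpha>" using i(2) v(2) by linarith
      moreover have "ereal \<alpha> < ereal (dist x v)" using x(2) set_dist_le[OF v(1), of x] by (rule order_less_le_trans)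
      ultimately show False by simp
    qed
    then show "\<omega> \<in> (\<Union>i<N. A i)" using i(1) ws unfolding A_def by auto
  qed
  have "measure M E \<le> measure M (\<Union>i<N. A i)"
    using sub A_sets by (intro P.finite_measure_mono) auto
  also have "\<dots> \<le> (\<Sum>i<N. measure M (A i))" by (rule measure_UNION_le) (auto simp: A_sets)
  also have "\<dots> = real N * exp (- pi * \<alpha>^2 / 4)" by (simp add: A_meas)
  also have "real N = of_int \<lceil>8 * R / \<alpha>\<rceil>"
  proof -
    have "8*R/\<alpha> > 0" using assms by simp
    then show ?thesis unfolding N_def by simp
  qed
  finally show ?thesis using E_sets unfolding E_def by simp
qed

end
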